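(* For all integers $n\ge k\ge 2$, $$(\lceil \log (k+1)\rceil+1)\left\lfloor \frac{n}{4k}\right\rfloor \le \gamma_{\rm i}(P_n^k)\le \frac{\lceil \log(k+1)\rceil+2}{2k+2}\,n+\lceil\log(k+1)\rceil+2,$$ where $\log$ is the logarithm of base $2$. In particular, $\gamma_{\rm i}(P_n^k)=\Theta\!\left(\frac{\log k}{k}\,n\right)$ as $n\to\infty$.
   Context: $P_n$ is the path on $n$ vertices. The $k$-th power $G^k$ of a graph $G$ has vertex set $V(G)$, with $uv$ an edge iff $1\le d_G(u,v)\le k$. Indicated domination game on a graph $G$: two players, Dominator and Staller, alternate. In each round Dominator indicates a vertex $v$ not yet dominated by the vertices previously selected by Staller (a vertex dominates itself and its neighbors), and Staller must select a vertex of the closed neighborhood $N[v]$, adding it to a set $D$. The game ends when $D$ is a dominating set of $G$. Dominator wants to minimize $|D|$ and Staller to maximize it; the size of $D$ under optimal play of both is the indicated domination number $\gamma_{\rm i}(G)$. *)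

theory Defs
  imports Complex_Main
begin

text \<open>A finite graph is given by a vertex set V and a symmetric irreflexive
adjacency predicate E.  Closed neighbourhood of v.\<close>
definition cnbhd :: "'a set \<Rightarrow> ('a \<Rightarrow> 'a \<Rightarrow> bool) \<Rightarrow> 'a \<Rightarrow> 'a set" where
  "cnbhd V E v = {u \<in> V. u = v \<or> E v u}"

definition dominated_by :: "'a set \<Rightarrow> ('a \<Rightarrow> 'a \<Rightarrow> bool) \<Rightarrow> 'a set \<Rightarrow> 'a set" where
  "dominated_by V E D = {v \<in> V. \<exists>u \<in> D. u \<in> cnbhd V E v}"

definition is_dominating :: "'a set \<Rightarrow> ('a \<Rightarrow> 'a \<Rightarrow> bool) \<Rightarrow> 'a set \<Rightarrow> bool" where
  "is_dominating V E D \<longleftrightarrow> dominated_by V E D = V"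

text \<open>ind_dom_win V E m D: starting from the position where Staller has
selected the set D, Dominator has a strategy guaranteeing that the game ends
after at most m further selections, whatever Staller does.\<close>
fun ind_dom_win :: "'a set \<Rightarrow> ('a \<Rightarrow> 'a \<Rightarrow> bool) \<Rightarrow> nat \<Rightarrow> 'a set \<Rightarrow> bool" where
  "ind_dom_win V E 0 D = is_dominating V E D"
| "ind_dom_win V E (Suc m) D =
     (is_dominating V E D \<or>
      (\<exists>v \<in> V. v \<notin> dominated_by V E D \<and>
          (\<forall>u \<in> cnbhd V E v. ind_dom_win V E m (insert u D))))"

definition indicated_domination_number :: "'a set \<Rightarrow> ('a \<Rightarrow> 'a \<Rightarrow> bool) \<Rightarrow> nat" where
  "indicated_domination_number V E = (LEAST m. ind_dom_win V E m {})"

definition path_dist :: "nat \<Rightarrow> nat \<Rightarrow> nat" where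
  "path_dist i j = (if i \<le> j then j - i else i - j)"

definition path_power_adj :: "nat \<Rightarrow> nat \<Rightarrow> nat \<Rightarrow> bool" where
  "path_power_adj k i j \<longleftrightarrow> 1 \<le> path_dist i j \<and> path_dist i j \<le> k"

definition gamma_i_path_power :: "nat \<Rightarrow> nat \<Rightarrow> nat" where
  "gamma_i_path_power n k = indicated_domination_number {..<n} (path_power_adj k)"

end

theory Submission
  imports Defs
begin


definition und :: "nat \<Rightarrow> nat \<Rightarrow> nat set \<Rightarrow> nat set" where
  "und n k D = {..<n} - dominated_by {..<n} (path_power_adj k) D"

lemma cnbhd_pp: "u \<in> cnbhd {..<n} (path_power_adj k) v \<longleftrightarrow> u < n \<and> path_dist v u \<le> k"
  unfolding cnbhd_def path_power_adj_def path_dist_def by auto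

lemma und_iff: "x \<in> und n k D \<longleftrightarrow> x < n \<and> (\<forall>w\<in>D. w < n \<longrightarrow> k < path_dist x w)"
  unfolding und_def dominated_by_def by (auto simp: cnbhd_pp not_le)

lemma und_insert: "u < n \<Longrightarrow> und n k (insert u D) = {x \<in> und n k D. k < path_dist x u}"
  by (auto simp: und_iff)

lemma isdom_iff: "is_dominating {..<n} (path_power_adj k) D \<longleftrightarrow> und n k D = {}"
  unfolding is_dominating_def und_def dominated_by_def by auto

lemma win_Suc_intro:
  assumes "v < n" "v \<in> und n k D"
    "\<And>u. u < n \<Longrightarrow> path_dist v u \<le> k \<Longrightarrow> ind_dom_win {..<n} (path_power_adj k) m (insert u D)"
  shows "ind_dom_win {..<n} (path_power_adj k) (Suc m) D"
proof -
  have "v \<notin> dominated_by {..<n} (path_power_adj k) D" using assms(2) unfolding und_def by auto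
  then show ?thesis using assms by (auto simp: cnbhd_pp)
qed

lemma win_dom: "und n k D = {} \<Longrightarrow> ind_dom_win {..<n} (path_power_adj k) m D"
  by (cases m) (auto simp: isdom_iff)

lemma win_mono: "ind_dom_win V E m D \<Longrightarrow> m \<le> m' \<Longrightarrow> ind_dom_win V E m' D"
proof (induction m arbitrary: m' D)
  case 0
  then show ?case by (cases m') auto
next
  case (Suc m)
  then obtain m'' where m': "m' = Suc m''" by (cases m') auto
  show ?case using Suc.prems Suc.IH unfolding m' by fastforce
qed

lemma gap:
  fixes k n y m :: nat
  assumes "und n k D = {a..<c} \<union> {y..<n}" "c - a < 2^j" "c \<le> a + 2*k+2" "c + 2*k \<le> y"
    "\<And>D'. und n k D' = {y..<n} \<Longrightarrow> ind_dom_win {..<n} (path_power_adj k) m D'"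
  shows "ind_dom_win {..<n} (path_power_adj k) (j + m) D"
  using assms(1-4)
proof (induction j arbitrary: D a c)
  case 0
  then have "und n k D = {y..<n}" by auto
  then show ?case using assms(5) by simp
next
  case (Suc j)
  show ?case
  proof (cases "a < c")
    case False
    then have "und n k D = {y..<n}" using Suc.prems by auto
    then show ?thesis using assms(5) win_mono by (metis le_add2)
  next
    case True
    define v where "v = (a + c - 1) div 2"
    have va: "a \<le> v" "v < c" using True unfolding v_def by auto
    have vU: "v \<in> und n k D" using Suc.prems(1) va by auto
    then have vn: "v < n" by (simp add: und_iff)
    show ?thesis unfolding add_Suc
    proof (rule win_Suc_intro[OF vn vU])
      fix u assume un: "u < n" and uv: "path_dist v u \<le> k"
      have u1: "u \<le> v + k" "v \<le> u + k" using uv by (auto simp: path_dist_def split: if_splits)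
      have yU: "{y..<n} \<subseteq> {x. k < path_dist x u}"
        using u1 va Suc.prems(4) by (auto simp: path_dist_def)
      have "u \<le> a + k \<or> c \<le> u + k + 1" using Suc.prems(3) u1 va by linarith
      then show "ind_dom_win {..<n} (path_power_adj k) (j + m) (insert u D)"
      proof
        assume h: "u \<le> a + k"
        have "und n k (insert u D) = {u+k+1..<c} \<union> {y..<n}"
          unfolding und_insert[OF un] Suc.prems(1) using yU h va u1
          by (auto simp: path_dist_def split: if_splits)
        moreover have "c - (u+k+1) < 2^j" using Suc.prems(2) u1 unfolding v_def by auto
        ultimately show ?thesis using Suc.prems(3,4) u1 va by (intro Suc.IH[of _ "u+k+1" c]) auto
      next
        assume h: "c \<le> u + k + 1"
        have "und n k (insert u D) = {a..<u-k} \<union> {y..<n}"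
          unfolding und_insert[OF un] Suc.prems(1) using yU h va u1
          by (auto simp: path_dist_def split: if_splits)
        moreover have "(u-k) - a < 2^j" using Suc.prems(2) u1 unfolding v_def by auto
        ultimately show ?thesis using Suc.prems(3,4) u1 va h by (intro Suc.IH[of _ a "u-k"]) auto
      qed
    qed
  qed
qed

lemma upper_main:
  fixes k n L :: nat
  assumes kL: "k + 1 \<le> 2^L"
  shows "und n k D = {x..<n} \<Longrightarrow>
    ind_dom_win {..<n} (path_power_adj k) ((L+2) * ((n-x) div (2*k+2)) + L + 1) D"
proof (induction "n - x" arbitrary: x D rule: less_induct)
  case less
  have K: "2*k+2 \<le> 2^(L+1)" using kL by simp
  show ?case
  proof (cases "n - x < 2*k+2")
    case True
    have "ind_dom_win {..<n} (path_power_adj k) ((L+1) + 0) D"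
    proof (rule gap[where a=x and c=n and y="n+2*k"])
      show "und n k D = {x..<n} \<union> {n+2*k..<n}" using less.prems by auto
      show "n - x < 2^(L+1)" using True K by linarith
    qed (use True in \<open>auto simp: isdom_iff\<close>)
    then show ?thesis by (rule win_mono) auto
  next
    case False
    define v where "v = x + 2*k + 1"
    have vn: "v < n" using False unfolding v_def by linarith
    have vU: "v \<in> und n k D" using less.prems vn unfolding v_def by auto
    define q where "q = (n-x) div (2*k+2)"
    have ar: "Suc (L + 1 + ((L+2) * ((n-(u+k+1)) div (2*k+2)) + L + 1)) \<le> (L+2) * q + L + 1"
      if "v \<le> u + k" for u
    proof -
      have "n-(u+k+1) + (2*k+2) \<le> n - x" using that False unfolding v_def by linarith
      then have "(n-(u+k+1) + (2*k+2)) div (2*k+2) \<le> q" unfolding q_def by (rule div_le_mono)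
      then have "(n-(u+k+1)) div (2*k+2) + 1 \<le> q" by (subst (asm) div_add_self2) auto
      then have "(L+2) * ((n-(u+k+1)) div (2*k+2) + 1) \<le> (L+2) * q" by (rule mult_le_mono2)
      then show ?thesis by (simp add: algebra_simps)
    qed
    have "(L+2) * q + L + 1 = Suc ((L+2) * q + L)" by simp
    moreover have "ind_dom_win {..<n} (path_power_adj k) (Suc ((L+2) * q + L)) D"
    proof (rule win_Suc_intro[OF vn vU])
      fix u assume un: "u < n" and uv: "path_dist v u \<le> k"
      have u1: "u \<le> v + k" "v \<le> u + k" using uv by (auto simp: path_dist_def split: if_splits)
      have "ind_dom_win {..<n} (path_power_adj k) (L + 1 + ((L+2) * ((n-(u+k+1)) div (2*k+2)) + L + 1)) (insert u D)"
      proof (rule gap[where a=x and c="u-k" and y="u+k+1"])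
        show "und n k (insert u D) = {x..<u-k} \<union> {u+k+1..<n}"
          unfolding und_insert[OF un] less.prems using u1 un unfolding v_def
          by (auto simp: path_dist_def split: if_splits)
        show "u - k - x < 2^(L+1)" using u1 K unfolding v_def by linarith
        show "u - k \<le> x + 2*k+2" using u1 unfolding v_def by linarith
        show "u - k + 2*k \<le> u+k+1" using u1 unfolding v_def by linarith
        show "ind_dom_win {..<n} (path_power_adj k) ((L+2) * ((n-(u+k+1)) div (2*k+2)) + L + 1) D'"
          if "und n k D' = {u+k+1..<n}" for D'
          using less.hyps[of "u+k+1" D'] that u1 vn unfolding v_def by linarith
      qed
      then show "ind_dom_win {..<n} (path_power_adj k) ((L+2) * q + L) (insert u D)"
        by (rule win_mono) (use ar[OF u1(2)] in simp)
    qed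
    ultimately show ?thesis unfolding q_def by simp
  qed
qed



fun lam :: "nat \<Rightarrow> nat" where
  "lam g = (if g = 0 then 0 else Suc (lam (g div 2)))"
declare lam.simps[simp del]

lemma lam0[simp]: "lam 0 = 0" by (simp add: lam.simps)
lemma lam_pos: "0 < g \<Longrightarrow> lam g = Suc (lam (g div 2))" by (simp add: lam.simps)

lemma lam_mono: "x \<le> y \<Longrightarrow> lam x \<le> lam y"
proof (induction y arbitrary: x rule: less_induct)
  case (less y)
  show ?case
  proof (cases "x = 0")
    case False
    then have "lam (x div 2) \<le> lam (y div 2)" using less by (intro less.IH) (auto intro: div_le_mono)
    then show ?thesis using False less.prems by (simp add: lam_pos)
  qed simp
qed

lemma lam_pred: "lam g \<le> Suc (lam (g - 1))"
proof (cases "g \<le> 1")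
  case True
  then have "g = 0 \<or> g = 1" by auto
  then show ?thesis by (auto simp: lam_pos)
next
  case False
  have "lam g \<le> lam (2 * (g - 1))" using False by (intro lam_mono) auto
  also have "\<dots> = Suc (lam (g - 1))" using False by (subst lam_pos) auto
  finally show ?thesis .
qed

lemma lam_pow: "2^j \<le> g \<Longrightarrow> j + 1 \<le> lam g"
proof (induction j arbitrary: g)
  case 0
  then show ?case by (simp add: lam_pos)
next
  case (Suc j)
  have "2*2^j div 2 \<le> g div 2" using Suc.prems by (intro div_le_mono) simp
  then have "2^j \<le> g div 2" by simp
  then have "j + 1 \<le> lam (g div 2)" by (rule Suc.IH)
  moreover have "0 < (2::nat)^(Suc j)" by simp
  then have "0 < g" using Suc.prems by linarith
  ultimately show ?case by (simp add: lam_pos)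
qed

lemma blocks_sep: "j < i \<Longrightarrow> 4*k*j + 4*k \<le> 4*k*(i::nat)"
proof -
  assume "j < i"
  then have "4*k*(j+1) \<le> 4*k*i" by (intro mult_le_mono2) auto
  then show ?thesis by (simp add: algebra_simps)
qed

lemma far: "j \<noteq> i \<Longrightarrow> 4*k*i \<le> u \<Longrightarrow> u < 4*k*i+4*k \<Longrightarrow> 4*k*j+k \<le> x \<Longrightarrow> x < 4*k*j+3*k
  \<Longrightarrow> k < path_dist x u"
proof -
  assume a: "j \<noteq> i" "4*k*i \<le> u" "u < 4*k*i+4*k" "4*k*j+k \<le> x" "x < 4*k*j+3*k"
  show ?thesis
  proof (cases "j < i")
    case True
    with blocks_sep[OF True, of k] a show ?thesis by (auto simp: path_dist_def)
  next
    case False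
    then have "i < j" using a by auto
    with blocks_sep[OF this, of k] a show ?thesis by (auto simp: path_dist_def)
  qed
qed

definition HH :: "nat \<Rightarrow> nat \<Rightarrow> nat \<Rightarrow> nat set \<Rightarrow> (nat \<Rightarrow> nat) \<Rightarrow> (nat \<Rightarrow> nat) \<Rightarrow> bool" where
  "HH n k N D a b \<longleftrightarrow> (\<forall>i<N. \<forall>x. a i \<le> x \<and> x < b i \<longrightarrow>
      4*k*i+k \<le> x \<and> x < 4*k*i+3*k \<and> x \<in> und n k D)"

definition SS :: "nat \<Rightarrow> (nat \<Rightarrow> nat) \<Rightarrow> (nat \<Rightarrow> nat) \<Rightarrow> nat" where
  "SS N a b = (\<Sum>i<N. lam (b i - a i))"

lemma sum_upd_le:
  fixes F G :: "nat \<Rightarrow> nat"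
  assumes "ii < N" "\<And>i. i < N \<Longrightarrow> i \<noteq> ii \<Longrightarrow> F i = G i" "F ii \<le> G ii + 1"
  shows "(\<Sum>i<N. F i) \<le> (\<Sum>i<N. G i) + 1"
proof -
  have "(\<Sum>i<N. F i) = F ii + (\<Sum>i\<in>{..<N}-{ii}. F i)" using assms(1) by (subst sum.remove) auto
  also have "(\<Sum>i\<in>{..<N}-{ii}. F i) = (\<Sum>i\<in>{..<N}-{ii}. G i)" using assms(2) by (intro sum.cong) auto
  also have "(\<Sum>i<N. G i) = G ii + (\<Sum>i\<in>{..<N}-{ii}. G i)" using assms(1) by (subst sum.remove) auto
  ultimately show ?thesis using assms(3) by linarith
qed

lemma step_noloss:
  assumes "u < n" "path_dist v u \<le> k" "HH n k N D a b"
    "\<And>i x. i < N \<Longrightarrow> 4*k*i+k \<le> x \<Longrightarrow> x < 4*k*i+3*k \<Longrightarrow> k < path_dist x u"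
  shows "\<exists>u a' b'. u < n \<and> path_dist v u \<le> k \<and> HH n k N (insert u D) a' b' \<and> SS N a b \<le> SS N a' b' + 1"
proof (intro exI conjI)
  show "HH n k N (insert u D) a b" using assms(3,4) unfolding HH_def und_insert[OF assms(1)] by blast
qed (use assms in auto)

lemma step_gen:
  assumes "u < n" "u \<le> v + k" "v \<le> u + k" "HH n k N D a b" "ii < N" "4*k*ii \<le> u" "u < 4*k*ii+4*k"
    "\<And>x. \<alpha> \<le> x \<Longrightarrow> x < \<beta> \<Longrightarrow> a ii \<le> x \<and> x < b ii \<and> (x + k < u \<or> u + k < x)"
    "lam (b ii - a ii) \<le> lam (\<beta> - \<alpha>) + 1"
  shows "\<exists>u a' b'. u < n \<and> path_dist v u \<le> k \<and> HH n k N (insert u D) a' b' \<and> SS N a b \<le> SS N a' b' + 1"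
proof (intro exI conjI)
  have A7: "a ii \<le> x \<and> x < b ii \<and> k < path_dist x u" if "\<alpha> \<le> x" "x < \<beta>" for x
    using assms(8)[OF that] by (auto simp: path_dist_def)
  show "HH n k N (insert u D) (a(ii:=\<alpha>)) (b(ii:=\<beta>))"
    unfolding HH_def und_insert[OF assms(1)]
  proof (intro allI impI)
    fix i x assume i: "i < N" and x: "(a(ii := \<alpha>)) i \<le> x \<and> x < (b(ii := \<beta>)) i"
    show "4*k*i+k \<le> x \<and> x < 4*k*i+3*k \<and> x \<in> {x \<in> und n k D. k < path_dist x u}"
    proof (cases "i = ii")
      case True
      then show ?thesis using x assms(4) A7 i unfolding HH_def by auto
    next
      case False
      then have "4*k*i+k \<le> x \<and> x < 4*k*i+3*k \<and> x \<in> und n k D" using x assms(4) i unfolding HH_def by auto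
      moreover then have "k < path_dist x u" using far[OF False assms(6,7)] by auto
      ultimately show ?thesis by auto
    qed
  qed
  show "SS N a b \<le> SS N (a(ii:=\<alpha>)) (b(ii:=\<beta>)) + 1"
    unfolding SS_def by (rule sum_upd_le[OF assms(5)]) (use assms(9) in auto)
qed (use assms in \<open>auto simp: path_dist_def\<close>)



lemma staller_step:
  assumes k: "0 < k" and nN: "4*k*N \<le> n" and v: "v \<in> und n k D" and H: "HH n k N D a b" and N: "0 < N"
  shows "\<exists>u a' b'. u < n \<and> path_dist v u \<le> k \<and> HH n k N (insert u D) a' b' \<and> SS N a b \<le> SS N a' b' + 1"
proof -
  have vn: "v < n" using v by (simp add: und_iff)
  define q where "q = v div (4*k)"
  define r where "r = v mod (4*k)"
  have vqr: "v = 4*k*q + r" unfolding q_def r_def by simp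
  have r4: "r < 4*k" unfolding r_def using k by simp
  show ?thesis
  proof (cases "q < N")
    case qN: True
    have qn: "4*k*q + 4*k \<le> n" using blocks_sep[OF qN, of k] nN by linarith
    consider (lo) "r < k" | (hi) "3*k \<le> r" | (mid) "k \<le> r" "r < 3*k" by linarith
    then show ?thesis
    proof cases
      case lo
      show ?thesis
      proof (rule step_gen[where u="4*k*q" and ii=q and \<alpha>="max (a q) (4*k*q+k+1)" and \<beta>="b q"])
        show "lam (b q - a q) \<le> lam (b q - max (a q) (4*k*q+k+1)) + 1"
        proof -
          have "b q - max (a q) (4*k*q+k+1) \<ge> b q - a q - 1"
          proof (cases "a q < b q")
            case True
            then have "4*k*q+k \<le> a q \<and> a q < 4*k*q+3*k" using H qN unfolding HH_def by blast
            moreover have "a q \<le> b q - 1 \<and> b q - 1 < b q" using True by linarith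
            then have "b q - 1 < 4*k*q+3*k" using H qN unfolding HH_def by blast
            ultimately show ?thesis by linarith
          qed simp
          from lam_mono[OF this] show ?thesis using lam_pred[of "b q - a q"] by linarith
        qed
      qed (use qN qn lo vqr H k in \<open>auto\<close>)
    next
      case hi
      show ?thesis
      proof (rule step_gen[where u="4*k*q+4*k-1" and ii=q and \<alpha>="a q" and \<beta>="min (b q) (4*k*q+3*k-1)"])
        show "lam (b q - a q) \<le> lam (min (b q) (4*k*q+3*k-1) - a q) + 1"
        proof -
          have "min (b q) (4*k*q+3*k-1) - a q \<ge> b q - a q - 1"
          proof (cases "a q < b q")
            case True
            then have "4*k*q+k \<le> a q \<and> a q < 4*k*q+3*k" using H qN unfolding HH_def by blast
            moreover have "a q \<le> b q - 1 \<and> b q - 1 < b q" using True by linarith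
            then have "b q - 1 < 4*k*q+3*k" using H qN unfolding HH_def by blast
            ultimately show ?thesis by linarith
          qed simp
          from lam_mono[OF this] show ?thesis using lam_pred[of "b q - a q"] by linarith
        qed
      qed (use qN qn hi vqr H k r4 in \<open>auto\<close>)
    next
      case mid
      consider (left) "v < a q" | (right) "b q \<le> v" | (inside) "a q \<le> v" "v < b q" by linarith
      then show ?thesis
      proof cases
        case left
        show ?thesis
          by (rule step_gen[where u="v-k" and ii=q and \<alpha>="a q" and \<beta>="b q"])
            (use qN qn mid left vqr H k vn in \<open>auto\<close>)
      next
        case right
        show ?thesis
          by (rule step_gen[where u="v+k" and ii=q and \<alpha>="a q" and \<beta>="b q"])
            (use qN qn mid right vqr H k vn in \<open>auto\<close>)
      next
        case inside
        have g0: "0 < b q - a q" using inside by linarith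
        have lg: "lam (b q - a q) = Suc (lam ((b q - a q) div 2))" using g0 by (rule lam_pos)
        show ?thesis
        proof (cases "(b q - a q) div 2 \<le> v - a q")
          case True
          show ?thesis
          proof (rule step_gen[where u="v+k" and ii=q and \<alpha>="a q" and \<beta>="v"])
            show "lam (b q - a q) \<le> lam (v - a q) + 1" using lg lam_mono[OF True] by simp
          qed (use qN qn mid inside vqr H k vn in \<open>auto\<close>)
        next
          case False
          then have F: "(b q - a q) div 2 \<le> b q - (v+1)" using inside by linarith
          show ?thesis
          proof (rule step_gen[where u="v-k" and ii=q and \<alpha>="v+1" and \<beta>="b q"])
            show "lam (b q - a q) \<le> lam (b q - (v+1)) + 1" using lg lam_mono[OF F] by simp
          qed (use qN qn mid inside vqr H k vn in \<open>auto\<close>)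
        qed
      qed
    qed
  next
    case False
    then have vN: "4*k*N \<le> v" using vqr by (metis le_add1 le_trans mult_le_mono2 not_less)
    show ?thesis
    proof (cases "4*k*N + k \<le> v")
      case True
      show ?thesis
      proof (rule step_noloss[where u="v-k"])
        fix i x assume "i < N" "4*k*i+k \<le> x" "x < 4*k*i+3*k"
        moreover have "4*k*i + 4*k \<le> 4*k*N" using blocks_sep[OF \<open>i < N\<close>] .
        ultimately show "k < path_dist x (v-k)" using True by (auto simp: path_dist_def)
      qed (use vn H True in \<open>auto simp: path_dist_def\<close>)
    next
      case False
      define q' where "q' = N - 1"
      have q'N: "q' < N" "4*k*q' + 4*k = 4*k*N" using N unfolding q'_def
        by (auto simp: algebra_simps)
      show ?thesis
      proof (rule step_gen[where u="4*k*q'+4*k-1" and ii=q' and \<alpha>="a q'" and \<beta>="min (b q') (4*k*q'+3*k-1)"])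
        show "lam (b q' - a q') \<le> lam (min (b q') (4*k*q'+3*k-1) - a q') + 1"
        proof -
          have "min (b q') (4*k*q'+3*k-1) - a q' \<ge> b q' - a q' - 1"
          proof (cases "a q' < b q'")
            case True
            then have "4*k*q'+k \<le> a q' \<and> a q' < 4*k*q'+3*k" using H q'N unfolding HH_def by blast
            moreover have "a q' \<le> b q' - 1 \<and> b q' - 1 < b q'" using True by linarith
            then have "b q' - 1 < 4*k*q'+3*k" using H q'N unfolding HH_def by blast
            ultimately show ?thesis by linarith
          qed simp
          from lam_mono[OF this] show ?thesis using lam_pred[of "b q' - a q'"] by linarith
        qed
      qed (use q'N nN False vN H k in \<open>auto\<close>)
    qed
  qed
qed

lemma SS_zero: "und n k D = {} \<Longrightarrow> HH n k N D a b \<Longrightarrow> SS N a b = 0"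
proof -
  assume u: "und n k D = {}" and H: "HH n k N D a b"
  have "b i - a i = 0" if "i < N" for i
  proof (rule ccontr)
    assume "b i - a i \<noteq> 0"
    then have "a i \<le> a i \<and> a i < b i" by auto
    then have "a i \<in> und n k D" using H that unfolding HH_def by blast
    then show False using u by auto
  qed
  then show ?thesis unfolding SS_def by simp
qed

lemma lower:
  assumes "ind_dom_win {..<n} (path_power_adj k) m D" "0 < k" "4*k*N \<le> n" "HH n k N D a b"
  shows "SS N a b \<le> m"
  using assms(1,4)
proof (induction m arbitrary: D a b)
  case 0
  then show ?case using SS_zero by (simp add: isdom_iff)
next
  case (Suc m)
  show ?case
  proof (cases "is_dominating {..<n} (path_power_adj k) D")
    case True
    then show ?thesis using SS_zero Suc.prems by (simp add: isdom_iff)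
  next
    case False
    then obtain v where v: "v < n" "v \<notin> dominated_by {..<n} (path_power_adj k) D"
      "\<forall>u \<in> cnbhd {..<n} (path_power_adj k) v. ind_dom_win {..<n} (path_power_adj k) m (insert u D)"
      using Suc.prems(1) by auto
    have vU: "v \<in> und n k D" using v unfolding und_def by auto
    show ?thesis
    proof (cases "N = 0")
      case True
      then show ?thesis unfolding SS_def by simp
    next
      case False
      obtain u a' b' where st: "u < n" "path_dist v u \<le> k" "HH n k N (insert u D) a' b'" "SS N a b \<le> SS N a' b' + 1"
        using staller_step[OF assms(2,3) vU Suc.prems(2)] False by blast
      have "ind_dom_win {..<n} (path_power_adj k) m (insert u D)" using v(3) st(1,2) by (simp add: cnbhd_pp)
      then have "SS N a' b' \<le> m" using Suc.IH st(3) by blast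
      then show ?thesis using st(4) by simp
    qed
  qed
qed

theorem theorem6p1:
  fixes n k :: nat
  assumes "2 \<le> k" and "k \<le> n"
  shows "real_of_int (\<lceil>log 2 (real k + 1)\<rceil> + 1) * real (n div (4 * k))
           \<le> real (gamma_i_path_power n k)
       \<and> real (gamma_i_path_power n k)
           \<le> real_of_int (\<lceil>log 2 (real k + 1)\<rceil> + 2) / real (2 * k + 2) * real n
              + real_of_int \<lceil>log 2 (real k + 1)\<rceil> + 2"
proof -
  define l where "l = log 2 (real k + 1)"
  define L where "L = nat \<lceil>l\<rceil>"
  have l0: "0 < l" unfolding l_def using assms by simp
  have LL: "\<lceil>l\<rceil> = int L" unfolding L_def using l0 by simp
  have L1: "1 \<le> L" using l0 unfolding L_def by linarith
  have "l \<le> real L" using LL by (metis le_of_int_ceiling of_int_of_nat_eq)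
  then have "real k + 1 \<le> 2 powr real L" unfolding l_def by (subst (asm) log_le_iff) auto
  then have "real k + 1 \<le> 2 ^ L" by (simp add: powr_realpow)
  then have "real (k + 1) \<le> real (2^L)" by simp
  then have kL: "k + 1 \<le> 2^L" by (simp only: of_nat_le_iff)
  have "real L - 1 < l" using LL ceiling_correct[of l] by simp
  then have "real (L - 1) < l" using L1 by (simp add: of_nat_diff)
  then have "2 powr real (L - 1) < real k + 1" unfolding l_def by (subst (asm) less_log_iff) auto
  then have "2 ^ (L-1) < real k + 1" by (simp add: powr_realpow)
  then have "real (2 ^ (L-1)) < real (k + 1)" by simp
  then have "2 ^ (L-1) < k + 1" by (simp only: of_nat_less_iff)
  moreover obtain L' where L': "L = Suc L'" using L1 by (cases L) auto
  ultimately have Lk: "2^L \<le> 2*k" by simp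
  define M where "M = (L+2) * ((n-0) div (2*k+2)) + L + 1"
  have win: "ind_dom_win {..<n} (path_power_adj k) M {}" unfolding M_def
    by (rule upper_main[OF kL]) (auto simp: und_iff)
  define g where "g = gamma_i_path_power n k"
  have g_def': "g = (LEAST m. ind_dom_win {..<n} (path_power_adj k) m {})"
    unfolding g_def gamma_i_path_power_def indicated_domination_number_def by simp
  have gM: "g \<le> M" unfolding g_def' by (rule Least_le) (rule win)
  have gwin: "ind_dom_win {..<n} (path_power_adj k) g {}" unfolding g_def' by (rule LeastI) (rule win)
  define N where "N = n div (4*k)"
  have NN: "4*k*N \<le> n" unfolding N_def by (metis mult.commute div_times_less_eq_dividend)
  have H: "HH n k N {} (\<lambda>i. 4*k*i+k) (\<lambda>i. 4*k*i+3*k)"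
    unfolding HH_def
  proof (intro allI impI)
    fix i x assume i: "i < N" and x: "4*k*i+k \<le> x \<and> x < 4*k*i+3*k"
    have "x < n" using blocks_sep[OF i, of k] NN x by linarith
    then show "4*k*i+k \<le> x \<and> x < 4*k*i+3*k \<and> x \<in> und n k {}" using x by (simp add: und_iff)
  qed
  have "SS N (\<lambda>i. 4*k*i+k) (\<lambda>i. 4*k*i+3*k) \<le> g"
    by (rule lower[OF gwin _ NN H]) (use assms in simp)
  moreover have "SS N (\<lambda>i. 4*k*i+k) (\<lambda>i. 4*k*i+3*k) = N * lam (2*k)"
    unfolding SS_def by simp
  moreover have "L + 1 \<le> lam (2*k)" by (rule lam_pow[OF Lk])
  ultimately have low: "(L+1) * N \<le> g" by (metis le_trans mult.commute mult_le_mono2)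
  have part1: "real_of_int (\<lceil>l\<rceil> + 1) * real N \<le> real g"
    using low unfolding LL by (metis of_int_of_nat_eq of_nat_1 of_nat_add of_nat_le_iff of_nat_mult)
  have K0: "0 < real (2*k+2)" by simp
  have dv: "real (n div (2*k+2)) \<le> real n / real (2*k+2)"
  proof -
    have "(n div (2*k+2)) * (2*k+2) \<le> n" by (rule div_times_less_eq_dividend)
    then have "real (n div (2*k+2)) * real (2*k+2) \<le> real n" by (metis of_nat_le_iff of_nat_mult)
    then show ?thesis using K0 by (simp add: pos_le_divide_eq del: of_nat_add of_nat_mult)
  qed
  have "real g \<le> real M" using gM by simp
  also have "\<dots> = real (L+2) * real (n div (2*k+2)) + real L + 1" unfolding M_def by (simp add: algebra_simps)
  also have "\<dots> \<le> real (L+2) * (real n / real (2*k+2)) + real L + 2"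
  proof -
    have "real (L+2) * real (n div (2*k+2)) \<le> real (L+2) * (real n / real (2*k+2))"
      by (rule mult_left_mono[OF dv]) simp
    then show ?thesis by linarith
  qed
  also have "\<dots> = real_of_int (\<lceil>l\<rceil> + 2) / real (2 * k + 2) * real n + real_of_int \<lceil>l\<rceil> + 2"
    unfolding LL by simp
  finally show ?thesis using part1 unfolding g_def l_def N_def by simp
qed

end
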